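(* $\lambda_1$ is isolated: there exists $\delta>\lambda_1$ such that $\lambda_1$ is the unique eigenvalue of problem (B2) in $(0,\delta)$.
   Context: Let $N\ge1$ be an integer. Problem (B2) is: $\left((-v')^N\right)'=\lambda^N N r^{N-1}v^N$ in $(0,1)$, $v'(0)=v(1)=0$. A number $\lambda>0$ is an eigenvalue of (B2) if (B2) has a solution $v\in C^2[0,1]$, $v\not\equiv0$. $\lambda_1>0$ denotes the first eigenvalue of (B2), i.e. the unique $\lambda>0$ for which (B2) has a solution positive in $(0,1)$ (it is simple and no eigenvalue lies in $(0,\lambda_1)$). *)

theory Defs
  imports "HOL-Analysis.Analysis"
begin

definition B2_solution :: "nat \<Rightarrow> real \<Rightarrow> (real \<Rightarrow> real) \<Rightarrow> bool" where
  "B2_solution N lam v \<longleftrightarrow>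
     (\<exists>v' v''.
        (\<forall>x\<in>{0..1}. (v has_real_derivative v' x) (at x within {0..1}) \<and>
                     (v' has_real_derivative v'' x) (at x within {0..1})) \<and>
        continuous_on {0..1} v'' \<and>
        (\<forall>r\<in>{0<..<1}. ((\<lambda>t. (- v' t) ^ N) has_real_derivative
                         (lam ^ N * real N * r ^ (N - 1) * (v r) ^ N)) (at r)) \<and>
        v' 0 = 0 \<and> v 1 = 0)"

definition B2_eigenvalue :: "nat \<Rightarrow> real \<Rightarrow> bool" where
  "B2_eigenvalue N lam \<longleftrightarrow> lam > 0 \<and>
     (\<exists>v. B2_solution N lam v \<and> (\<exists>x\<in>{0..1}. v x \<noteq> 0))"

end

theory Submission
  imports Defs
begin

definition sol :: "nat \<Rightarrow> real \<Rightarrow> real \<Rightarrow> (real \<Rightarrow> real) \<Rightarrow> (real \<Rightarrow> real) \<Rightarrow> bool" where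
  "sol N lam T f f' \<longleftrightarrow> T > 0 \<and>
     (\<forall>x\<in>{0..T}. (f has_real_derivative f' x) (at x within {0..T})) \<and>
     continuous_on {0..T} f' \<and>
     (\<forall>r\<in>{0<..<T}. ((\<lambda>t. (- f' t) ^ N) has_real_derivative
                         (lam ^ N * real N * r ^ (N - 1) * (f r) ^ N)) (at r)) \<and>
     f' 0 = 0"

lemma B2_sol:
  assumes "B2_solution N lam v"
  shows "\<exists>v'. sol N lam 1 v v'"
proof -
  obtain v' v'' where d: "\<forall>x\<in>{0..1}. (v has_real_derivative v' x) (at x within {0..1}) \<and>
                     (v' has_real_derivative v'' x) (at x within {0..1})"
    and o: "\<forall>r\<in>{0<..<1}. ((\<lambda>t. (- v' t) ^ N) has_real_derivative
                         (lam ^ N * real N * r ^ (N - 1) * (v r) ^ N)) (at r)"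
    and z: "v' 0 = 0"
    using assms unfolding B2_solution_def by blast
  have "continuous_on {0..1} v'"
    unfolding continuous_on_eq_continuous_within using d DERIV_continuous by blast
  then show ?thesis using d o z unfolding sol_def by (intro exI[of _ v']) auto
qed

lemma sol_restrict:
  assumes "sol N lam T f f'" "0 < T'" "T' \<le> T"
  shows "sol N lam T' f f'"
  using assms unfolding sol_def
  apply (intro conjI)
  apply simp
  apply (meson DERIV_subset atLeastAtMost_iff atLeastatMost_subset_iff order_trans order_refl)
  apply (meson atLeastatMost_subset_iff continuous_on_subset order_refl)
  apply (auto)
  done

lemma sol_cont: "sol N lam T f f' \<Longrightarrow> continuous_on {0..T} f"
  unfolding sol_def continuous_on_eq_continuous_within using DERIV_continuous by blast

lemma sol_at:
  assumes "sol N lam T f f'" "x \<in> {0<..<T}"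
  shows "(f has_real_derivative f' x) (at x)"
proof -
  have "(f has_real_derivative f' x) (at x within {0..T})" using assms unfolding sol_def by auto
  moreover have "at x within {0..T} = at x" using assms(2) by (intro at_within_Icc_at) auto
  ultimately show ?thesis by simp
qed

lemma my_mvt:
  fixes f :: "real \<Rightarrow> real"
  assumes "a < b" "continuous_on {a..b} f" "\<And>x. x\<in>{a<..<b} \<Longrightarrow> (f has_real_derivative f' x) (at x)"
  shows "\<exists>z\<in>{a<..<b}. f b - f a = (b - a) * f' z"
proof -
  obtain l z where "a < z" "z < b" "DERIV f z :> l" "f b - f a = (b - a) * l"
  proof -
    have "f differentiable (at x)" if "a < x" "x < b" for x
      using assms(3)[of x] that unfolding real_differentiable_def by auto
    then show ?thesis using MVT[OF assms(1,2)] that by blast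
  qed
  moreover have "DERIV f z :> f' z" using assms(3) calculation(1,2) by auto
  moreover have "l = f' z" using DERIV_unique calculation(3,5) by blast
  ultimately show ?thesis by auto
qed

lemma sol_scale:
  assumes "sol N lam T f f'" "\<kappa> > 0" "lam' = \<kappa>^2 * lam" "T' = T / \<kappa>" "N \<ge> 1"
  shows "sol N lam' T' (\<lambda>r. c * f (\<kappa> * r)) (\<lambda>r. c * \<kappa> * f' (\<kappa> * r))"
proof -
  have T: "T > 0" and d: "\<forall>x\<in>{0..T}. (f has_real_derivative f' x) (at x within {0..T})"
    and cf: "continuous_on {0..T} f'"
    and o: "\<forall>r\<in>{0<..<T}. ((\<lambda>t. (- f' t) ^ N) has_real_derivative
                         (lam ^ N * real N * r ^ (N - 1) * (f r) ^ N)) (at r)"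
    and z: "f' 0 = 0" using assms(1) unfolding sol_def by auto
  have img: "(\<lambda>r. \<kappa> * r) ` {0..T'} = {0..T}"
  proof
    show "(\<lambda>r. \<kappa> * r) ` {0..T'} \<subseteq> {0..T}"
      using assms(2,4) by (auto simp: field_simps)
    show "{0..T} \<subseteq> (\<lambda>r. \<kappa> * r) ` {0..T'}"
    proof
      fix y assume y: "y \<in> {0..T}"
      then have "y / \<kappa> \<in> {0..T'}" using assms(2,4) by (auto simp: divide_right_mono)
      moreover have "y = \<kappa> * (y / \<kappa>)" using assms(2) by simp
      ultimately show "y \<in> (\<lambda>r. \<kappa> * r) ` {0..T'}" by blast
    qed
  qed
  have "(\<lambda>r. \<kappa> * r) ` {0..T'} \<subseteq> {0..T}" using img by simp
  have D: "((\<lambda>r. c * f (\<kappa> * r)) has_real_derivative c * \<kappa> * f' (\<kappa> * r)) (at r within {0..T'})"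
    if "r \<in> {0..T'}" for r
  proof -
    have "\<kappa> * r \<in> {0..T}" using img that by blast
    then have "(f has_real_derivative f' (\<kappa> * r)) (at (\<kappa> * r) within (\<lambda>r. \<kappa> * r) ` {0..T'})"
      using d img by auto
    moreover have "((\<lambda>r. \<kappa> * r) has_real_derivative \<kappa>) (at r within {0..T'})"
      by (auto intro!: derivative_eq_intros)
    ultimately have "(f \<circ> (\<lambda>r. \<kappa> * r) has_real_derivative f' (\<kappa> * r) * \<kappa>) (at r within {0..T'})"
      by (rule DERIV_image_chain)
    from DERIV_cmult[OF this, of c] show ?thesis by (simp add: o_def mult_ac)
  qed
  have C: "continuous_on {0..T'} (\<lambda>r. c * \<kappa> * f' (\<kappa> * r))"
  proof -
    have "continuous_on {0..T'} (\<lambda>r. f' (\<kappa> * r))"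
      by (rule continuous_on_compose2[OF cf]) (use img in \<open>auto intro!: continuous_on_mult continuous_on_const continuous_on_id\<close>)
    then show ?thesis by (intro continuous_intros)
  qed
  have O: "((\<lambda>t. (- (c * \<kappa> * f' (\<kappa> * t))) ^ N) has_real_derivative
           (lam' ^ N * real N * r ^ (N - 1) * (c * f (\<kappa> * r)) ^ N)) (at r)" if "r \<in> {0<..<T'}" for r
  proof -
    have "\<kappa> * r \<in> {0<..<T}" using that assms(2,4) by (auto simp: field_simps)
    then have o1: "((\<lambda>t. (- f' t) ^ N) has_real_derivative
                         (lam ^ N * real N * (\<kappa>*r) ^ (N - 1) * (f (\<kappa>*r)) ^ N)) (at (\<kappa>*r))" using o by auto
    have "((\<lambda>t. (- f' (\<kappa> * t)) ^ N) has_real_derivative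
                         (lam ^ N * real N * (\<kappa>*r) ^ (N - 1) * (f (\<kappa>*r)) ^ N) * \<kappa>) (at r)"
      by (rule DERIV_chain2[where g="\<lambda>t. \<kappa>*t", OF o1]) (auto intro!: derivative_eq_intros)
    from DERIV_cmult[OF this, of "(c*\<kappa>)^N"]
    have d1: "((\<lambda>t. (c*\<kappa>)^N * (- f' (\<kappa> * t)) ^ N) has_real_derivative
           (c*\<kappa>)^N * ((lam ^ N * real N * (\<kappa>*r) ^ (N - 1) * (f (\<kappa>*r)) ^ N) * \<kappa>)) (at r)" .
    have e2: "(\<lambda>t. (c*\<kappa>)^N * (- f' (\<kappa> * t)) ^ N) = (\<lambda>t. (- (c * \<kappa> * f' (\<kappa> * t))) ^ N)"
      by (rule ext) (metis mult_minus_right power_mult_distrib)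
    have e3: "(c*\<kappa>)^N * ((lam ^ N * real N * (\<kappa>*r) ^ (N - 1) * (f (\<kappa>*r)) ^ N) * \<kappa>)
        = lam' ^ N * real N * r ^ (N - 1) * (c * f (\<kappa> * r)) ^ N"
    proof -
      obtain m where m: "N = Suc m" using assms(5) by (cases N) auto
      have k: "(\<kappa>^2)^Suc m = \<kappa>^Suc m * \<kappa>^m * \<kappa>" by (simp add: power2_eq_square power_mult_distrib)
      show ?thesis unfolding m assms(3) by (simp only: power_mult_distrib k diff_Suc_1) (simp add: mult_ac)
    qed
    show ?thesis using d1 unfolding e2 e3 .
  qed
  have "T' > 0" using T assms(2,4) by simp
  then show ?thesis unfolding sol_def
  proof (intro conjI ballI)
    show "c * \<kappa> * f' (\<kappa> * 0) = 0" using z by simp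
  qed (use D C O in auto)
qed


lemma pw_upper:
  fixes x y M :: real
  assumes "\<bar>x\<bar> \<le> M" "\<bar>y\<bar> \<le> M"
  shows "\<bar>x^N - y^N\<bar> \<le> real N * M^(N-1) * \<bar>x - y\<bar>"
proof -
  have M: "0 \<le> M" using assms(1) by linarith
  have "\<bar>(\<Sum>i<N. y^(N - Suc i) * x^i)\<bar> \<le> (\<Sum>i<N. \<bar>y\<bar>^(N - Suc i) * \<bar>x\<bar>^i)"
    by (rule order_trans[OF sum_abs]) (simp add: abs_mult power_abs)
  also have "\<dots> \<le> (\<Sum>i<N. M^(N - Suc i) * M^i)"
    by (intro sum_mono mult_mono power_mono) (use assms M in auto)
  also have "\<dots> = (\<Sum>i<N. M^(N - 1))"
    by (intro sum.cong refl) (simp add: power_add[symmetric])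
  also have "\<dots> = real N * M^(N-1)" by simp
  finally have "\<bar>(\<Sum>i<N. y^(N - Suc i) * x^i)\<bar> \<le> real N * M^(N-1)" .
  then show ?thesis
    unfolding power_diff_sumr2[of x N y] abs_mult
    by (metis abs_ge_zero mult.commute mult_left_mono)
qed

lemma pw_lower:
  fixes x y m :: real
  assumes "m \<le> x" "m \<le> y" "0 \<le> m"
  shows "real N * m^(N-1) * \<bar>x - y\<bar> \<le> \<bar>x^N - y^N\<bar>"
proof -
  have "real N * m^(N-1) = (\<Sum>i<N. m^(N - 1))" by simp
  also have "\<dots> = (\<Sum>i<N. m^(N - Suc i) * m^i)"
    by (intro sum.cong refl) (simp add: power_add[symmetric])
  also have "\<dots> \<le> (\<Sum>i<N. y^(N - Suc i) * x^i)"
    by (intro sum_mono mult_mono power_mono) (use assms in auto)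
  finally have s: "real N * m^(N-1) \<le> (\<Sum>i<N. y^(N - Suc i) * x^i)" .
  have "0 \<le> real N * m^(N-1)" using assms by simp
  then have "real N * m^(N-1) \<le> \<bar>\<Sum>i<N. y^(N - Suc i) * x^i\<bar>" using s by linarith
  then show ?thesis
    unfolding power_diff_sumr2[of x N y] abs_mult
    by (metis abs_ge_zero mult.commute mult_left_mono)
qed

lemma ext_induct:
  fixes f g :: "real \<Rightarrow> real"
  assumes h: "0 < h" and T: "0 \<le> T" and z: "f 0 = g 0"
    and step: "\<And>a. 0 \<le> a \<Longrightarrow> a < T \<Longrightarrow> \<forall>x\<in>{0..a}. f x = g x \<Longrightarrow> \<forall>x\<in>{0..min T (a+h)}. f x = g x"
  shows "\<forall>x\<in>{0..T}. f x = g x"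
proof -
  have I: "\<forall>x\<in>{0..min T (real n * h)}. f x = g x" for n
  proof (induction n)
    case 0
    then show ?case using z T by auto
  next
    case (Suc n)
    show ?case
    proof (cases "T \<le> real n * h")
      case True
      then have "min T (real (Suc n) * h) = min T (real n * h)" using h by (simp add: algebra_simps)
      then show ?thesis using Suc by simp
    next
      case False
      then have "min T (real n * h) = real n * h" by simp
      then have "\<forall>x\<in>{0..min T (real n * h + h)}. f x = g x"
        using step[of "real n * h"] Suc False h by auto
      then show ?thesis by (simp add: algebra_simps)
    qed
  qed
  obtain n where "T < real n * h" using ex_less_of_nat_mult[OF h] by blast
  then show ?thesis using I[of n] by simp
qed

lemma small_zero:
  fixes d :: "real \<Rightarrow> real"
  assumes "\<forall>t\<in>S. \<bar>d t\<bar> \<le> q * \<bar>d t0\<bar>" "q < 1" "t0 \<in> S"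
  shows "\<forall>t\<in>S. d t = 0"
proof -
  have "\<bar>d t0\<bar> \<le> q * \<bar>d t0\<bar>" using assms by auto
  then have "\<bar>d t0\<bar> = 0" using assms(2)
    by (metis abs_ge_zero mult_le_cancel_right1 not_le order_antisym_conv)
  then show ?thesis using assms(1) by (metis abs_le_zero_iff mult_zero_right)
qed

lemma sol_P_cont:
  assumes "sol N lam T f f'" "0 \<le> s" "s \<le> T"
  shows "continuous_on {0..s} (\<lambda>t. (- f' t) ^ N)"
proof -
  have "continuous_on {0..T} f'" using assms(1) unfolding sol_def by auto
  then have "continuous_on {0..s} f'" by (rule continuous_on_subset) (use assms in auto)
  then show ?thesis by (intro continuous_intros)
qed

lemma sol_P_der:
  assumes "sol N lam T f f'" "r \<in> {0<..<T}"
  shows "((\<lambda>t. (- f' t) ^ N) has_real_derivative (lam ^ N * real N * r ^ (N - 1) * (f r) ^ N)) (at r)"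
  using assms unfolding sol_def by auto

lemma sol_neg_deriv:
  assumes S: "sol N lam T f f'" and lam: "lam > 0" and N: "N \<ge> 1"
    and pos: "\<forall>x\<in>{0..<T}. f x > 0" and fT: "f T = 0"
  shows "\<forall>s\<in>{0<..T}. f' s < 0"
proof -
  have T: "T > 0" and f'0: "f' 0 = 0" and cf': "continuous_on {0..T} f'" using S unfolding sol_def by auto
  have Ppos: "(- f' s) ^ N > 0" if s: "s \<in> {0<..T}" for s
  proof -
    obtain z where z: "z \<in> {0<..<s}"
      and e: "(- f' s) ^ N - (- f' 0) ^ N = (s - 0) * (lam ^ N * real N * z ^ (N - 1) * (f z) ^ N)"
    proof -
      have "\<exists>z\<in>{0<..<s}. (- f' s) ^ N - (- f' 0) ^ N = (s - 0) * (lam ^ N * real N * z ^ (N - 1) * (f z) ^ N)"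
      proof (rule my_mvt)
        show "0 < s" using s by simp
        show "continuous_on {0..s} (\<lambda>t. (- f' t) ^ N)" by (rule sol_P_cont[OF S]) (use s in auto)
        fix x assume "x \<in> {0<..<s}"
        then show "((\<lambda>t. (- f' t) ^ N) has_real_derivative lam ^ N * real N * x ^ (N - 1) * (f x) ^ N) (at x)"
          using s by (intro sol_P_der[OF S]) auto
      qed
      then show ?thesis using that by blast
    qed
    have "f z > 0" using pos z s by auto
    then have "lam ^ N * real N * z ^ (N - 1) * (f z) ^ N > 0" using lam N z by auto
    moreover have e0: "(- f' 0) ^ N = 0" using f'0 N by simp
    ultimately have "(- f' s) ^ N = s * (lam ^ N * real N * z ^ (N - 1) * (f z) ^ N)" using e e0 by simp
    then show ?thesis using s \<open>lam ^ N * real N * z ^ (N - 1) * (f z) ^ N > 0\<close> by simp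
  qed
  have nz: "f' s \<noteq> 0" if "s \<in> {0<..T}" for s
    using Ppos[OF that] N by (auto simp: power_0_left)
  obtain \<xi> where \<xi>: "\<xi> \<in> {0<..<T}" and e: "f T - f 0 = (T - 0) * f' \<xi>"
  proof -
    have "\<exists>z\<in>{0<..<T}. f T - f 0 = (T - 0) * f' z"
    proof (rule my_mvt)
      show "0 < T" using T .
      show "continuous_on {0..T} f" by (rule sol_cont[OF S])
      fix x assume "x \<in> {0<..<T}" then show "(f has_real_derivative f' x) (at x)" by (rule sol_at[OF S])
    qed
    then show ?thesis using that by blast
  qed
  have "f 0 > 0" using pos T by auto
  then have "T * f' \<xi> < 0" using e fT by simp
  then have neg: "f' \<xi> < 0" using T by (simp add: mult_less_0_iff)
  show ?thesis
  proof (rule ballI, rule ccontr)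
    fix s assume s: "s \<in> {0<..T}" and "\<not> f' s < 0"
    then have sp: "f' s > 0" using nz[OF s] by linarith
    show False
    proof (cases "\<xi> \<le> s")
      case True
      have "continuous_on {\<xi>..s} f'" by (rule continuous_on_subset[OF cf']) (use \<xi> s in auto)
      then have "\<exists>x. \<xi> \<le> x \<and> x \<le> s \<and> f' x = 0" by (intro IVT') (use neg sp True in auto)
      then obtain x where x: "\<xi> \<le> x" "x \<le> s" "f' x = 0" by blast
      have "x \<in> {0<..T}" using x \<xi> s by simp
      then show False using nz x(3) by blast
    next
      case False
      have "continuous_on {s..\<xi>} f'" by (rule continuous_on_subset[OF cf']) (use \<xi> s in auto)
      then have "\<exists>x. s \<le> x \<and> x \<le> \<xi> \<and> f' x = 0" by (intro IVT2') (use neg sp False in auto)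
      then obtain x where x: "s \<le> x" "x \<le> \<xi>" "f' x = 0" by blast
      have "x \<in> {0<..T}" using x \<xi> s by simp
      then show False using nz x(3) by blast
    qed
  qed
qed


lemma real_le_pow_self: "1 \<le> N \<Longrightarrow> real N \<le> real N ^ N"
proof -
  assume "1 \<le> N"
  then have "real N ^ 1 \<le> real N ^ N" by (intro power_increasing) auto
  then show ?thesis by simp
qed

lemma sol_zero:
  assumes S: "sol N lam T f f'" and lam: "lam > 0" and N: "N \<ge> 1" and f0: "f 0 = 0"
  shows "\<forall>x\<in>{0..T}. f x = 0"
proof -
  obtain m where m: "N = Suc m" using N by (cases N) auto
  have T: "T > 0" and f'0: "f' 0 = 0" using S unfolding sol_def by auto
  define K where "K = real N * lam * T"
  define h where "h = 1 / (K + 1)"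
  have K: "K \<ge> 0" using lam T unfolding K_def by simp
  have h: "h > 0" "h * K < 1" using K unfolding h_def by (auto simp: field_simps)
  have "\<forall>x\<in>{0..T}. f x = (\<lambda>_. 0::real) x"
  proof (rule ext_induct[OF h(1)])
    show "0 \<le> T" using T by simp
    show "f 0 = 0" using f0 .
    fix a assume a: "0 \<le> a" "a < T" "\<forall>x\<in>{0..a}. f x = 0"
    define b where "b = min T (a + h)"
    have b: "a < b" "b \<le> T" "b - a \<le> h" using a h unfolding b_def by auto
    have cf: "continuous_on {0..b} f" by (rule continuous_on_subset[OF sol_cont[OF S]]) (use b in auto)
    have cfa: "continuous_on {0..b} (\<lambda>t. \<bar>f t\<bar>)" by (intro continuous_intros cf)
    obtain t0 where t0: "t0 \<in> {0..b}" "\<forall>t\<in>{0..b}. \<bar>f t\<bar> \<le> \<bar>f t0\<bar>"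
      using continuous_attains_sup[OF _ _ cfa] b a by auto
    define E where "E = \<bar>f t0\<bar>"
    have E: "E \<ge> 0" unfolding E_def by simp
    have fd: "\<bar>f' s\<bar> \<le> K * E" if s: "s \<in> {0<..b}" for s
    proof -
      obtain z where z: "z \<in> {0<..<s}"
        and e: "(- f' s) ^ N - (- f' 0) ^ N = (s - 0) * (lam ^ N * real N * z ^ (N - 1) * (f z) ^ N)"
      proof -
        have "\<exists>z\<in>{0<..<s}. (- f' s) ^ N - (- f' 0) ^ N = (s - 0) * (lam ^ N * real N * z ^ (N - 1) * (f z) ^ N)"
        proof (rule my_mvt)
          show "0 < s" using s by simp
          show "continuous_on {0..s} (\<lambda>t. (- f' t) ^ N)" by (rule sol_P_cont[OF S]) (use s b in auto)
          fix x assume "x \<in> {0<..<s}"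
          then show "((\<lambda>t. (- f' t) ^ N) has_real_derivative lam ^ N * real N * x ^ (N - 1) * (f x) ^ N) (at x)"
            using s b by (intro sol_P_der[OF S]) auto
        qed
        then show ?thesis using that by blast
      qed
      have e0: "(- f' 0) ^ N = 0" using f'0 N by simp
      have fz: "\<bar>f z\<bar> \<le> E" using t0 z s unfolding E_def by auto
      have "\<bar>f' s\<bar> ^ N = \<bar>(- f' s) ^ N\<bar>" by (simp add: power_abs)
      also have "\<dots> = s * (lam ^ N * real N * z ^ m * \<bar>f z\<bar> ^ N)"
      proof -
        have Nm: "N - 1 = m" using m by simp
        have e': "(- f' s)^N = s * (lam ^ N * real N * z ^ m * (f z) ^ N)" using e e0 Nm by simp
        show ?thesis unfolding e' using s z lam by (simp add: abs_mult power_abs)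
      qed
      also have "\<dots> \<le> T * (lam ^ N * real N * T ^ m * E ^ N)"
        using s z b lam fz
        by (intro mult_mono power_mono mult_nonneg_nonneg) auto
      also have "\<dots> = real N * (lam * T * E) ^ N"
        unfolding m by (simp add: power_mult_distrib mult_ac)
      also have "\<dots> \<le> real N ^ N * (lam * T * E) ^ N"
        using real_le_pow_self[OF N] lam T E by (intro mult_right_mono) auto
      also have "\<dots> = (K * E) ^ N" unfolding K_def by (simp add: power_mult_distrib mult_ac)
      finally have "\<bar>f' s\<bar> ^ Suc m \<le> (K * E) ^ Suc m" unfolding m .
      then show ?thesis by (rule power_le_imp_le_base) (use K E in simp)
    qed
    have bound: "\<forall>t\<in>{0..b}. \<bar>f t\<bar> \<le> (h * K) * \<bar>f t0\<bar>"
    proof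
      fix t assume t: "t \<in> {0..b}"
      show "\<bar>f t\<bar> \<le> (h * K) * \<bar>f t0\<bar>"
      proof (cases "t \<le> a")
        case True
        then show ?thesis using a t h K by auto
      next
        case False
        have cab: "continuous_on {a..t} f" by (rule continuous_on_subset[OF cf]) (use a t in auto)
        obtain \<xi> where \<xi>: "\<xi> \<in> {a<..<t}" and e: "f t - f a = (t - a) * f' \<xi>"
        proof -
          have "\<exists>z\<in>{a<..<t}. f t - f a = (t - a) * f' z"
          proof (rule my_mvt)
            show "a < t" using False by simp
            show "continuous_on {a..t} f" by (rule cab)
            fix x assume "x \<in> {a<..<t}" then show "(f has_real_derivative f' x) (at x)"
              using a t b by (intro sol_at[OF S]) auto
          qed
          then show ?thesis using that by blast
        qed
        have "f a = 0" using a by auto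
        then have "\<bar>f t\<bar> = (t - a) * \<bar>f' \<xi>\<bar>" using e False by (simp add: abs_mult)
        also have "\<dots> \<le> h * (K * E)"
          using fd[of \<xi>] \<xi> t a b False by (intro mult_mono) auto
        finally show ?thesis unfolding E_def by (simp add: mult_ac)
      qed
    qed
    have "\<forall>t\<in>{0..b}. f t = 0" using small_zero[OF bound h(2) t0(1)] .
    then show "\<forall>x\<in>{0..min T (a + h)}. f x = (\<lambda>_. 0::real) x" unfolding b_def by simp
  qed
  then show ?thesis by simp
qed


lemma sol_lower:
  assumes S: "sol N lam T f f'" and lam: "lam > 0" and N: "N \<ge> 1"
    and f0: "f 0 > 0" and neg: "\<forall>s\<in>{0<..T}. f' s < 0"
  shows "\<exists>c>0. \<forall>s\<in>{0..T}. c * s \<le> - f' s"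
proof -
  obtain m where m: "N = Suc m" using N by (cases N) auto
  have T: "T > 0" and f'0: "f' 0 = 0" and cf': "continuous_on {0..T} f'" using S unfolding sol_def by auto
  obtain d where d: "d > 0" "\<forall>x\<in>{0..T}. dist x 0 < d \<longrightarrow> dist (f x) (f 0) < f 0 / 2"
    using sol_cont[OF S] T f0 unfolding continuous_on_iff
    by (metis atLeastAtMost_iff half_gt_zero less_eq_real_def)
  define \<delta> where "\<delta> = min (d/2) T"
  have \<delta>: "\<delta> > 0" "\<delta> \<le> T" using d T unfolding \<delta>_def by auto
  have fbig: "f x > f 0 / 2" if "x \<in> {0..\<delta>}" for x
  proof -
    have "dist x 0 < d" using that d unfolding \<delta>_def by (auto simp: dist_real_def)
    then have "dist (f x) (f 0) < f 0 / 2" using d that \<delta> by auto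
    then show ?thesis unfolding dist_real_def by linarith
  qed
  define a where "a = lam * f 0 / 2"
  have a: "a > 0" using lam f0 unfolding a_def by simp
  have near: "a * s \<le> - f' s" if s: "s \<in> {0<..\<delta>}" for s
  proof -
    define Q where "Q = (\<lambda>t. (- f' t) ^ N - a ^ N * t ^ N)"
    define Q' where "Q' = (\<lambda>t. lam ^ N * real N * t ^ (N - 1) * (f t) ^ N - a ^ N * (real N * t ^ (N - 1)))"
    have cQ: "continuous_on {0..s} Q" unfolding Q_def
      by (intro continuous_intros sol_P_cont[OF S]) (use s \<delta> in auto)
    have dQ: "(Q has_real_derivative Q' t) (at t)" if t: "t \<in> {0<..<s}" for t
    proof -
      have "((\<lambda>t. (- f' t) ^ N) has_real_derivative (lam ^ N * real N * t ^ (N - 1) * (f t) ^ N)) (at t)"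
        using sol_P_der[OF S] t s \<delta> by auto
      moreover have "((\<lambda>t. a ^ N * t ^ N) has_real_derivative a ^ N * (real N * t ^ (N - 1))) (at t)"
        by (intro DERIV_cmult) (simp add: DERIV_pow)
      ultimately show ?thesis unfolding Q_def Q'_def by (rule DERIV_diff)
    qed
    obtain z where z: "z \<in> {0<..<s}" and e: "Q s - Q 0 = (s - 0) * Q' z"
    proof -
      have "\<exists>z\<in>{0<..<s}. Q s - Q 0 = (s - 0) * Q' z"
        by (rule my_mvt) (use s cQ dQ in auto)
      then show ?thesis using that by blast
    qed
    have "f z > f 0 / 2" using fbig z s by auto
    then have "(f 0 / 2) ^ N \<le> (f z) ^ N" using f0 by (intro power_mono) auto
    then have "lam ^ N * (f 0 / 2) ^ N \<le> lam ^ N * (f z) ^ N" using lam by (intro mult_left_mono) auto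
    moreover have "a ^ N = lam ^ N * (f 0 / 2) ^ N" unfolding a_def by (simp add: power_mult_distrib[symmetric])
    ultimately have "a ^ N \<le> lam ^ N * (f z) ^ N" by simp
    then have "a ^ N * (real N * z ^ (N - 1)) \<le> lam ^ N * (f z) ^ N * (real N * z ^ (N - 1))"
      using z by (intro mult_right_mono) auto
    then have "Q' z \<ge> 0" unfolding Q'_def by (simp add: mult_ac)
    moreover have "Q 0 = 0" unfolding Q_def using f'0 m by simp
    ultimately have "Q s \<ge> 0" using e s by simp
    then have "(a * s) ^ Suc m \<le> (- f' s) ^ Suc m" unfolding Q_def m by (simp add: power_mult_distrib mult_ac)
    then show ?thesis by (rule power_le_imp_le_base) (use neg s \<delta> in \<open>auto simp: less_imp_le\<close>)
  qed
  have cm: "continuous_on {\<delta>..T} (\<lambda>t. - f' t)"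
  proof -
    have "continuous_on {\<delta>..T} f'" by (rule continuous_on_subset[OF cf']) (use \<delta> in auto)
    then show ?thesis by (intro continuous_intros)
  qed
  obtain x1 where x1: "x1 \<in> {\<delta>..T}" "\<forall>y\<in>{\<delta>..T}. - f' x1 \<le> - f' y"
    using continuous_attains_inf[OF _ _ cm] \<delta> by auto
  define m0 where "m0 = - f' x1"
  have m0: "m0 > 0" using neg x1 \<delta> unfolding m0_def by auto
  define c where "c = min a (m0 / T)"
  have c: "c > 0" using a m0 T unfolding c_def by auto
  show ?thesis
  proof (intro exI[of _ c] conjI ballI c)
    fix s assume s: "s \<in> {0..T}"
    show "c * s \<le> - f' s"
    proof (cases "s = 0")
      case True then show ?thesis using f'0 by simp
    next
      case False
      show ?thesis
      proof (cases "s \<le> \<delta>")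
        case True
        then have "a * s \<le> - f' s" using near False s by auto
        moreover have "c * s \<le> a * s" using s unfolding c_def by (intro mult_right_mono) auto
        ultimately show ?thesis by linarith
      next
        case F2: False
        have "c * s \<le> (m0 / T) * s" using s unfolding c_def by (intro mult_right_mono) auto
        also have "\<dots> \<le> m0" using s T m0 by (auto simp: field_simps)
        also have "\<dots> \<le> - f' s" using x1 s F2 unfolding m0_def by auto
        finally show ?thesis .
      qed
    qed
  qed
qed


lemma bound_on:
  fixes f :: "real \<Rightarrow> real"
  assumes "continuous_on {0..T} f" "0 \<le> T"
  shows "\<exists>M. \<forall>t\<in>{0..T}. \<bar>f t\<bar> \<le> M"
proof -
  have "continuous_on {0..T} (\<lambda>t. \<bar>f t\<bar>)" by (rule continuous_on_rabs[OF assms(1)])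
  then obtain x where "x \<in> {0..T}" "\<forall>y\<in>{0..T}. \<bar>f y\<bar> \<le> \<bar>f x\<bar>"
    using continuous_attains_sup[of "{0..T}"] assms(2) by fastforce
  then show ?thesis by blast
qed

lemma sol_unique:
  assumes Sf: "sol N lam T f f'" and Sg: "sol N lam T g g'" and lam: "lam > 0" and N: "N \<ge> 1"
    and eq0: "f 0 = g 0" and f0: "f 0 > 0"
    and nf: "\<forall>s\<in>{0<..T}. f' s < 0" and ng: "\<forall>s\<in>{0<..T}. g' s < 0"
  shows "\<forall>x\<in>{0..T}. f x = g x"
proof -
  obtain m where m: "N = Suc m" using N by (cases N) auto
  have Nm: "N - 1 = m" using m by simp
  have T: "T > 0" and f'0: "f' 0 = 0" using Sf unfolding sol_def by auto
  have g'0: "g' 0 = 0" using Sg unfolding sol_def by auto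
  obtain cf where cf: "cf > 0" "\<forall>s\<in>{0..T}. cf * s \<le> - f' s" using sol_lower[OF Sf lam N f0 nf] by blast
  obtain cg where cg: "cg > 0" "\<forall>s\<in>{0..T}. cg * s \<le> - g' s" using sol_lower[OF Sg lam N _ ng] f0 eq0 by auto
  define c where "c = min cf cg"
  have c: "c > 0" using cf cg unfolding c_def by auto
  have clow: "c * s \<le> - f' s" "c * s \<le> - g' s" if "s \<in> {0..T}" for s
  proof -
    have "c * s \<le> cf * s" "c * s \<le> cg * s" using that unfolding c_def by (auto intro: mult_right_mono)
    then show "c * s \<le> - f' s" "c * s \<le> - g' s" using cf cg that by fastforce+
  qed
  obtain M1 where M1: "\<forall>t\<in>{0..T}. \<bar>f t\<bar> \<le> M1" using bound_on[OF sol_cont[OF Sf]] T by auto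
  obtain M2 where M2: "\<forall>t\<in>{0..T}. \<bar>g t\<bar> \<le> M2" using bound_on[OF sol_cont[OF Sg]] T by auto
  define M where "M = max M1 M2"
  have Mb: "\<bar>f t\<bar> \<le> M" "\<bar>g t\<bar> \<le> M" if "t \<in> {0..T}" for t using M1 M2 that unfolding M_def by fastforce+
  have M: "M \<ge> 0" using Mb[of 0] T by fastforce
  define K where "K = T * (lam ^ N * real N * M ^ m / c ^ m)"
  define h where "h = 1 / (K + 1)"
  have K: "K \<ge> 0" using lam T M c unfolding K_def by simp
  have h: "h > 0" "h * K < 1" using K unfolding h_def by (auto simp: field_simps)
  show ?thesis
  proof (rule ext_induct[OF h(1)])
    show "0 \<le> T" using T by simp
    show "f 0 = g 0" using eq0 .
    fix a assume a: "0 \<le> a" "a < T" "\<forall>x\<in>{0..a}. f x = g x"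
    define b where "b = min T (a + h)"
    have b: "a < b" "b \<le> T" "b - a \<le> h" using a h unfolding b_def by auto
    have cfg: "continuous_on {0..b} (\<lambda>t. f t - g t)"
    proof -
      have "continuous_on {0..b} f" by (rule continuous_on_subset[OF sol_cont[OF Sf]]) (use b in auto)
      moreover have "continuous_on {0..b} g" by (rule continuous_on_subset[OF sol_cont[OF Sg]]) (use b in auto)
      ultimately show ?thesis by (intro continuous_intros)
    qed
    have cfa: "continuous_on {0..b} (\<lambda>t. \<bar>f t - g t\<bar>)" by (intro continuous_intros cfg)
    obtain t0 where t0: "t0 \<in> {0..b}" "\<forall>t\<in>{0..b}. \<bar>f t - g t\<bar> \<le> \<bar>f t0 - g t0\<bar>"
      using continuous_attains_sup[OF _ _ cfa] b a by auto
    define E where "E = \<bar>f t0 - g t0\<bar>"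
    have E: "E \<ge> 0" unfolding E_def by simp
    have fd: "\<bar>f' s - g' s\<bar> \<le> K * E" if s: "s \<in> {0<..b}" for s
    proof -
      define D where "D = (\<lambda>t. (- f' t) ^ N - (- g' t) ^ N)"
      define D' where "D' = (\<lambda>r. lam ^ N * real N * r ^ (N - 1) * (f r) ^ N - lam ^ N * real N * r ^ (N - 1) * (g r) ^ N)"
      have cD: "continuous_on {0..s} D" unfolding D_def
        by (intro continuous_intros sol_P_cont[OF Sf] sol_P_cont[OF Sg]) (use s b in auto)
      have dD: "(D has_real_derivative D' r) (at r)" if r: "r \<in> {0<..<s}" for r
        unfolding D_def D'_def
        by (rule DERIV_diff; rule sol_P_der[OF Sf] sol_P_der[OF Sg]) (use r s b in auto)
      obtain z where z: "z \<in> {0<..<s}" and e: "D s - D 0 = (s - 0) * D' z"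
      proof -
        have "\<exists>z\<in>{0<..<s}. D s - D 0 = (s - 0) * D' z"
          by (rule my_mvt) (use s cD dD in auto)
        then show ?thesis using that by blast
      qed
      have D0: "D 0 = 0" unfolding D_def using f'0 g'0 by simp
      have zT: "z \<in> {0..T}" using z s b by auto
      have fz: "\<bar>f z - g z\<bar> \<le> E" using t0 z s unfolding E_def by auto
      have "\<bar>(f z) ^ N - (g z) ^ N\<bar> \<le> real N * M ^ (N - 1) * \<bar>f z - g z\<bar>"
        by (rule pw_upper) (use Mb zT in auto)
      also have "\<dots> \<le> real N * M ^ m * E" using fz M Nm by (auto intro: mult_left_mono)
      finally have pz: "\<bar>(f z) ^ N - (g z) ^ N\<bar> \<le> real N * M ^ m * E" .
      have "\<bar>D s\<bar> = s * (lam ^ N * real N * z ^ m * \<bar>(f z) ^ N - (g z) ^ N\<bar>)"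
        using e D0 z s lam Nm by (simp add: D'_def abs_mult right_diff_distrib[symmetric] mult.assoc)
      also have "\<dots> \<le> s * (lam ^ N * real N * s ^ m * (real N * M ^ m * E))"
        using z s lam pz by (intro mult_left_mono mult_mono power_mono) auto
      finally have up: "\<bar>D s\<bar> \<le> s * (lam ^ N * real N * s ^ m * (real N * M ^ m * E))" .
      have sT: "s \<in> {0..T}" using s b by auto
      have "real N * (c * s) ^ (N - 1) * \<bar>(- f' s) - (- g' s)\<bar> \<le> \<bar>D s\<bar>"
        unfolding D_def by (rule pw_lower) (use clow[OF sT] c s in auto)
      then have lo: "real N * (c * s) ^ m * \<bar>f' s - g' s\<bar> \<le> \<bar>D s\<bar>" using Nm by (simp add: abs_minus_commute)
      define Y where "Y = s * (lam ^ N * real N * M ^ m * E / c ^ m)"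
      have "s * (lam ^ N * real N * s ^ m * (real N * M ^ m * E)) = real N * (c * s) ^ m * Y"
        unfolding Y_def using c by (simp add: power_mult_distrib field_simps)
      then have "real N * (c * s) ^ m * \<bar>f' s - g' s\<bar> \<le> real N * (c * s) ^ m * Y" using lo up by linarith
      moreover have "real N * (c * s) ^ m > 0" using c s m by simp
      ultimately have "\<bar>f' s - g' s\<bar> \<le> Y" by (meson mult_le_cancel_left_pos)
      also have "Y \<le> K * E"
      proof -
        define X where "X = lam ^ N * real N * M ^ m * E / c ^ m"
        have X0: "0 \<le> X" using lam M c E unfolding X_def by simp
        have KE: "K * E = T * X" unfolding K_def X_def by simp
        have YX: "Y = s * X" unfolding Y_def X_def by simp
        have "s * X \<le> T * X" using s b X0 by (intro mult_right_mono) auto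
        then show ?thesis unfolding KE YX .
      qed
      finally show ?thesis .
    qed
    have bound: "\<forall>t\<in>{0..b}. \<bar>f t - g t\<bar> \<le> (h * K) * \<bar>f t0 - g t0\<bar>"
    proof
      fix t assume t: "t \<in> {0..b}"
      show "\<bar>f t - g t\<bar> \<le> (h * K) * \<bar>f t0 - g t0\<bar>"
      proof (cases "t \<le> a")
        case True
        then show ?thesis using a t h K by auto
      next
        case False
        have cab: "continuous_on {a..t} (\<lambda>t. f t - g t)" by (rule continuous_on_subset[OF cfg]) (use a t in auto)
        have dab: "((\<lambda>t. f t - g t) has_real_derivative f' x - g' x) (at x)" if "x \<in> {a<..<t}" for x
          by (rule DERIV_diff; rule sol_at[OF Sf] sol_at[OF Sg]) (use that a t b in auto)
        obtain \<xi> where \<xi>: "\<xi> \<in> {a<..<t}" and e: "(f t - g t) - (f a - g a) = (t - a) * (f' \<xi> - g' \<xi>)"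
        proof -
          have "\<exists>z\<in>{a<..<t}. (f t - g t) - (f a - g a) = (t - a) * (f' z - g' z)"
            by (rule my_mvt[where f="\<lambda>t. f t - g t" and f'="\<lambda>x. f' x - g' x"]) (use False cab dab in auto)
          then show ?thesis using that by blast
        qed
        have "f a - g a = 0" using a by auto
        then have "\<bar>f t - g t\<bar> = (t - a) * \<bar>f' \<xi> - g' \<xi>\<bar>" using e False by (simp add: abs_mult)
        also have "\<dots> \<le> h * (K * E)"
          using fd[of \<xi>] \<xi> t a b False by (intro mult_mono) auto
        finally show ?thesis unfolding E_def by (simp add: mult_ac)
      qed
    qed
    have "\<forall>t\<in>{0..b}. f t - g t = 0" using small_zero[OF bound h(2) t0(1)] .
    then show "\<forall>x\<in>{0..min T (a + h)}. f x = g x" unfolding b_def by simp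
  qed
qed


lemma first_zero:
  fixes f :: "real \<Rightarrow> real"
  assumes cf: "continuous_on {a..b} f" and x0: "x0 \<in> {a..b}" "f x0 = 0"
  shows "\<exists>z\<in>{a..b}. f z = 0 \<and> (\<forall>x\<in>{a..<z}. f x \<noteq> 0)"
proof -
  define Z where "Z = {x \<in> {a..b}. f x = 0}"
  have clZ: "closed Z" unfolding Z_def by (rule continuous_closed_preimage_constant[OF cf]) simp
  have c1: "compact ({a..b} \<inter> Z)" by (rule compact_Int_closed[OF compact_Icc clZ])
  have e1: "{a..b} \<inter> Z = Z" unfolding Z_def by blast
  have cZ: "compact Z" using c1 unfolding e1 .
  have ne: "Z \<noteq> {}" using x0 unfolding Z_def by blast
  have "\<exists>x\<in>Z. \<forall>y\<in>Z. x \<le> y" by (rule compact_attains_inf[OF cZ ne])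
  then obtain z where z: "z \<in> Z" "\<And>y. y \<in> Z \<Longrightarrow> z \<le> y" by auto
  have zab: "z \<in> {a..b}" and fz: "f z = 0" using z(1) unfolding Z_def by blast+
  have "\<forall>x\<in>{a..<z}. f x \<noteq> 0"
  proof
    fix x assume x: "x \<in> {a..<z}"
    show "f x \<noteq> 0"
    proof
      assume "f x = 0"
      moreover have "x \<in> {a..b}" using x zab by simp
      ultimately have "x \<in> Z" unfolding Z_def by blast
      then have "z \<le> x" by (rule z(2))
      then show False using x by simp
    qed
  qed
  then show ?thesis using zab fz by blast
qed

lemma sign_const:
  fixes f :: "real \<Rightarrow> real"
  assumes cf: "continuous_on {a..b} f" and fa: "f a > 0" and nz: "\<forall>x\<in>{a..<b}. f x \<noteq> 0"
  shows "\<forall>x\<in>{a..<b}. f x > 0"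
proof (rule ballI, rule ccontr)
  fix x assume x: "x \<in> {a..<b}" and "\<not> f x > 0"
  then have "f x \<le> 0" by simp
  have "continuous_on {a..x} f" by (rule continuous_on_subset[OF cf]) (use x in auto)
  then obtain y where "a \<le> y" "y \<le> x" "f y = 0" using IVT2'[of f x 0 a] fa \<open>f x \<le> 0\<close> x by auto
  then show False using nz x by auto
qed


lemma key:
  assumes N: "N \<ge> 1" and lam1: "lam1 > 0"
    and S1: "sol N lam1 1 v1 v1'" and v1pos: "\<forall>x\<in>{0..<1}. v1 x > 0" and v11: "v1 1 = 0"
    and lam: "lam > 0" and S: "sol N lam 1 v v'" and v1z: "v 1 = 0" and nz: "\<exists>x\<in>{0..1}. v x \<noteq> 0"
  shows "lam1 \<le> lam \<and> (\<exists>w w'. sol N lam1 (sqrt (lam / lam1)) w w' \<and> (\<forall>x\<in>{0..1}. w x = v1 x)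
            \<and> w (sqrt (lam / lam1)) = 0)"
proof -
  have v0: "v 0 \<noteq> 0" using sol_zero[OF S lam N] nz by auto
  have v10: "v1 0 > 0" using v1pos by auto
  have n1: "\<forall>s\<in>{0<..1}. v1' s < 0" using sol_neg_deriv[OF S1 lam1 N v1pos v11] .
  obtain z where z: "z \<in> {0..1}" "v z = 0" "\<forall>x\<in>{0..<z}. v x \<noteq> 0"
    using first_zero[OF sol_cont[OF S], of 1] v1z by auto
  have zpos: "z > 0" using z v0 by (cases "z = 0") auto
  define \<kappa> where "\<kappa> = sqrt (lam1 / lam)"
  have \<kappa>: "\<kappa> > 0" using lam lam1 unfolding \<kappa>_def by simp
  have \<kappa>2: "lam1 = \<kappa>^2 * lam" unfolding \<kappa>_def using lam lam1 by simp
  have R: "1 / \<kappa> = sqrt (lam / lam1)" unfolding \<kappa>_def by (simp add: real_sqrt_divide)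
  define c where "c = v1 0 / v 0"
  define w where "w = (\<lambda>r. c * v (\<kappa> * r))"
  define w' where "w' = (\<lambda>r. c * \<kappa> * v' (\<kappa> * r))"
  have Sw: "sol N lam1 (1 / \<kappa>) w w'" unfolding w_def w'_def
    by (rule sol_scale[OF S \<kappa> \<kappa>2 _ N]) simp
  have c0: "c \<noteq> 0" using v0 v10 unfolding c_def by simp
  have w0: "w 0 = v1 0" unfolding w_def c_def using v0 by simp
  define Z where "Z = z / \<kappa>"
  have Z: "Z > 0" "Z \<le> 1 / \<kappa>" using zpos z \<kappa> unfolding Z_def by (auto simp: divide_right_mono)
  have wZ: "w Z = 0" unfolding w_def Z_def using z \<kappa> by simp
  have wnz: "\<forall>x\<in>{0..<Z}. w x \<noteq> 0"
  proof
    fix x assume x: "x \<in> {0..<Z}"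
    then have "\<kappa> * x \<in> {0..<z}" using \<kappa> unfolding Z_def by (auto simp: field_simps)
    then show "w x \<noteq> 0" unfolding w_def using z c0 by auto
  qed
  have SwZ: "sol N lam1 Z w w'" by (rule sol_restrict[OF Sw Z])
  have wpos: "\<forall>x\<in>{0..<Z}. w x > 0"
    by (rule sign_const[OF sol_cont[OF SwZ]]) (use w0 v10 wnz in auto)
  have nw: "\<forall>s\<in>{0<..Z}. w' s < 0" by (rule sol_neg_deriv[OF SwZ lam1 N wpos wZ])
  define T where "T = min 1 Z"
  have T: "T > 0" "T \<le> 1" "T \<le> Z" using Z unfolding T_def by auto
  have eq: "\<forall>x\<in>{0..T}. v1 x = w x"
    by (rule sol_unique[OF sol_restrict[OF S1 T(1,2)] sol_restrict[OF SwZ T(1,3)] lam1 N])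
       (use w0 v10 n1 nw T in auto)
  have ZZ: "Z = 1"
  proof (rule ccontr)
    assume "Z \<noteq> 1"
    then consider "Z < 1" | "Z > 1" by linarith
    then show False
    proof cases
      case 1
      then have "T = Z" unfolding T_def by simp
      then have "v1 Z = 0" using eq wZ Z by auto
      moreover have "Z \<in> {0..<1}" using Z 1 by simp
      ultimately show False using v1pos by fastforce
    next
      case 2
      then have "T = 1" unfolding T_def by simp
      then have "w 1 = 0" using eq v11 by auto
      moreover have "(1::real) \<in> {0..<Z}" using 2 by simp
      ultimately show False using wpos by fastforce
    qed
  qed
  have "\<kappa> \<le> 1" using ZZ z \<kappa> unfolding Z_def by (auto simp: field_simps)
  then have "lam1 / lam \<le> 1" unfolding \<kappa>_def by simp
  then have l: "lam1 \<le> lam" using lam by (simp add: field_simps)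
  have "T = 1" using ZZ unfolding T_def by simp
  then have eq1: "\<forall>x\<in>{0..1}. w x = v1 x" using eq by auto
  have "w (1 / \<kappa>) = 0" unfolding w_def using \<kappa> v1z by simp
  then show ?thesis using l eq1 Sw R by auto
qed


theorem lemma3p3:
  fixes N :: nat and lam1 :: real
  assumes "N \<ge> 1"
    and "lam1 > 0"
    and "\<exists>v. B2_solution N lam1 v \<and> (\<forall>r\<in>{0<..<1}. v r > 0)"
  shows "\<exists>\<delta>>lam1. \<forall>lam\<in>{0<..<\<delta>}. B2_eigenvalue N lam \<longleftrightarrow> lam = lam1"
proof -
  note N = assms(1) and lam1 = assms(2)
  obtain v1 where B1: "B2_solution N lam1 v1" and v1p: "\<forall>r\<in>{0<..<1}. v1 r > 0" using assms(3) by blast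
  obtain v1' where S1: "sol N lam1 1 v1 v1'" using B2_sol[OF B1] by blast
  have v11: "v1 1 = 0" using B1 unfolding B2_solution_def by blast
  have half: "v1 (1/2) > 0" using v1p by auto
  have v10: "v1 0 > 0"
  proof (rule ccontr)
    assume "\<not> v1 0 > 0"
    moreover have "v1 0 \<noteq> 0" using sol_zero[OF S1 lam1 N] half by fastforce
    ultimately have "v1 0 < 0" by simp
    have "continuous_on {0..1/2} v1" by (rule continuous_on_subset[OF sol_cont[OF S1]]) auto
    then obtain x where "0 \<le> x" "x \<le> 1/2" "v1 x = 0" using IVT'[of v1 0 0 "1/2"] \<open>v1 0 < 0\<close> half by auto
    moreover have "x \<noteq> 0" using \<open>v1 0 < 0\<close> \<open>v1 x = 0\<close> by auto
    ultimately have "x \<in> {0<..<1}" by simp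
    then show False using v1p \<open>v1 x = 0\<close> by fastforce
  qed
  have v1pos: "\<forall>x\<in>{0..<1}. v1 x > 0" using v1p v10 by (metis atLeastLessThan_iff greaterThanLessThan_iff less_eq_real_def)
  have eig1: "B2_eigenvalue N lam1" unfolding B2_eigenvalue_def using lam1 B1 v10 by force
  have K: "lam1 \<le> lam \<and> (\<exists>w w'. sol N lam1 (sqrt (lam / lam1)) w w' \<and> (\<forall>x\<in>{0..1}. w x = v1 x)
            \<and> w (sqrt (lam / lam1)) = 0)" if eig: "B2_eigenvalue N lam" for lam
  proof -
    obtain v where lam: "lam > 0" and Bv: "B2_solution N lam v" and nz: "\<exists>x\<in>{0..1}. v x \<noteq> 0"
      using eig unfolding B2_eigenvalue_def by blast
    obtain v' where S: "sol N lam 1 v v'" using B2_sol[OF Bv] by blast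
    have "v 1 = 0" using Bv unfolding B2_solution_def by blast
    from key[OF N lam1 S1 v1pos v11 lam S this nz] show ?thesis .
  qed
  show ?thesis
  proof (cases "\<exists>lamB. B2_eigenvalue N lamB \<and> lamB > lam1")
    case False
    show ?thesis
    proof (intro exI[of _ "lam1 + 1"] conjI ballI)
      show "lam1 < lam1 + 1" by simp
      fix lam assume "lam \<in> {0<..<lam1 + 1}"
      show "B2_eigenvalue N lam \<longleftrightarrow> lam = lam1"
        using K[of lam] False eig1 by force
    qed
  next
    case True
    then obtain lamB where eB: "B2_eigenvalue N lamB" and lB: "lamB > lam1" by blast
    define RB where "RB = sqrt (lamB / lam1)"
    have RB: "RB > 1" unfolding RB_def using lB lam1 by simp
    obtain W W' where SW: "sol N lam1 RB W W'" and W1: "\<forall>x\<in>{0..1}. W x = v1 x"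
      using K[OF eB] unfolding RB_def by blast
    have SW1: "sol N lam1 1 W W'" by (rule sol_restrict[OF SW]) (use RB in auto)
    have nW1: "\<forall>s\<in>{0<..1}. W' s < 0"
      by (rule sol_neg_deriv[OF SW1 lam1 N]) (use W1 v1pos v11 in auto)
    have cW': "continuous_on {0..RB} W'" using SW unfolding sol_def by auto
    have W'1: "W' 1 < 0" using nW1 by auto
    obtain e where e: "e > 0" "\<forall>x\<in>{0..RB}. dist x 1 < e \<longrightarrow> dist (W' x) (W' 1) < - W' 1"
    proof -
      have ci: "\<forall>x\<in>{0..RB}. \<forall>\<epsilon>>0. \<exists>\<delta>>0. \<forall>x'\<in>{0..RB}. dist x' x < \<delta> \<longrightarrow> dist (W' x') (W' x) < \<epsilon>"
        using cW' unfolding continuous_on_iff .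
      have "1 \<in> {0..RB}" using RB by simp
      moreover have "- W' 1 > 0" using W'1 by simp
      ultimately show ?thesis using ci[rule_format, of 1 "- W' 1"] that by blast
    qed
    define \<epsilon> where "\<epsilon> = min (e/2) ((RB - 1)/2)"
    have \<epsilon>1: "\<epsilon> \<le> (RB - 1)/2" unfolding \<epsilon>_def by (rule min.cobounded2)
    have "\<epsilon> > 0" using e(1) RB unfolding \<epsilon>_def by auto
    moreover have "1 + \<epsilon> < RB"
    proof -
      have "2 * \<epsilon> \<le> RB - 1" using \<epsilon>1 by (simp add: field_simps)
      then show ?thesis using RB \<open>\<epsilon> > 0\<close> by linarith
    qed
    ultimately have \<epsilon>: "\<epsilon> > 0" "1 + \<epsilon> < RB" by auto
    have nW: "\<forall>s\<in>{0<..1+\<epsilon>}. W' s < 0"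
    proof
      fix s assume s: "s \<in> {0<..1+\<epsilon>}"
      show "W' s < 0"
      proof (cases "s \<le> 1")
        case True then show ?thesis using nW1 s by auto
      next
        case False
        then have "dist s 1 < e" using s e unfolding \<epsilon>_def dist_real_def by auto
        then have "dist (W' s) (W' 1) < - W' 1" using e s \<epsilon> by auto
        then show ?thesis unfolding dist_real_def by linarith
      qed
    qed
    define \<delta> where "\<delta> = min lamB (lam1 * (1 + \<epsilon>)^2)"
    have sq: "1 < (1 + \<epsilon>)^2"
    proof -
      have "(1 + \<epsilon>)^2 = 1 + \<epsilon> * (2 + \<epsilon>)" by (simp add: power2_eq_square algebra_simps)
      moreover have "\<epsilon> * (2 + \<epsilon>) > 0" using \<epsilon> by simp
      ultimately show ?thesis by linarith
    qed
    have "lam1 * 1 < lam1 * (1 + \<epsilon>)^2"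
      using lam1 sq by (intro mult_strict_left_mono) auto
    then have \<delta>: "\<delta> > lam1" using lB unfolding \<delta>_def by simp
    show ?thesis
    proof (intro exI[of _ \<delta>] conjI ballI \<delta>)
      fix lam assume lamI: "lam \<in> {0<..<\<delta>}"
      show "B2_eigenvalue N lam \<longleftrightarrow> lam = lam1"
      proof
        assume "lam = lam1" then show "B2_eigenvalue N lam" using eig1 by simp
      next
        assume eL: "B2_eigenvalue N lam"
        show "lam = lam1"
        proof (rule ccontr)
          assume "lam \<noteq> lam1"
          then have ll: "lam > lam1" using K[OF eL] by simp
          define R where "R = sqrt (lam / lam1)"
          obtain w w' where Sw: "sol N lam1 R w w'" and w1: "\<forall>x\<in>{0..1}. w x = v1 x" and wR: "w R = 0"
            using K[OF eL] unfolding R_def by blast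
          have R1: "R > 1" unfolding R_def using ll lam1 by simp
          have "lam < lam1 * (1 + \<epsilon>)^2" using lamI unfolding \<delta>_def by simp
          then have "lam / lam1 < (1 + \<epsilon>)^2" using lam1 by (simp add: field_simps)
          then have "R < sqrt ((1 + \<epsilon>)^2)" unfolding R_def by (rule real_sqrt_less_mono)
          moreover have "sqrt ((1 + \<epsilon>)^2) = 1 + \<epsilon>" using \<epsilon> by simp
          ultimately have R2: "R < 1 + \<epsilon>" by simp
          have Sw1: "sol N lam1 1 w w'" by (rule sol_restrict[OF Sw]) (use R1 in auto)
          have nw1: "\<forall>s\<in>{0<..1}. w' s < 0"
            by (rule sol_neg_deriv[OF Sw1 lam1 N]) (use w1 v1pos v11 in auto)
          have cw': "continuous_on {0..R} w'" using Sw unfolding sol_def by auto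
          obtain \<xi> where \<xi>: "\<xi> \<in> {1<..<R}" and e\<xi>: "w R - w 1 = (R - 1) * w' \<xi>"
          proof -
            have "\<exists>z\<in>{1<..<R}. w R - w 1 = (R - 1) * w' z"
            proof (rule my_mvt)
              show "1 < R" using R1 .
              show "continuous_on {1..R} w" by (rule continuous_on_subset[OF sol_cont[OF Sw]]) auto
              fix x assume "x \<in> {1<..<R}" then show "(w has_real_derivative w' x) (at x)"
                by (intro sol_at[OF Sw]) auto
            qed
            then show ?thesis using that by blast
          qed
          have "w 1 = 0" using w1 v11 by simp
          then have w'\<xi>: "w' \<xi> = 0" using e\<xi> wR R1 by simp
          have cw'1: "continuous_on {1..R} w'" by (rule continuous_on_subset[OF cw']) auto
          obtain t1 where t1: "t1 \<in> {1..R}" "w' t1 = 0" "\<forall>x\<in>{1..<t1}. w' x \<noteq> 0"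
            using first_zero[OF cw'1, of \<xi>] \<xi> w'\<xi> by auto
          have "w' 1 < 0" using nw1 by simp
          then have "t1 \<noteq> 1" using t1(2) by auto
          then have t1g: "t1 > 1" using t1(1) by simp
          have neg: "\<forall>s\<in>{0<..<t1}. w' s < 0"
          proof
            fix s assume s: "s \<in> {0<..<t1}"
            show "w' s < 0"
            proof (cases "s \<le> 1")
              case True then show ?thesis using nw1 s by auto
            next
              case False
              have "continuous_on {1..t1} (\<lambda>x. - w' x)"
              proof -
                have "continuous_on {1..t1} w'" by (rule continuous_on_subset[OF cw']) (use t1 in auto)
                then show ?thesis by (intro continuous_intros)
              qed
              moreover have "- w' 1 > 0" using nw1 by auto
              moreover have "\<forall>x\<in>{1..<t1}. - w' x \<noteq> 0" using t1 by auto
              ultimately have "\<forall>x\<in>{1..<t1}. - w' x > 0" by (rule sign_const)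
              then show ?thesis using s False by auto
            qed
          qed
          have same: "W x = w x" if x: "x \<in> {0..<t1}" for x
          proof -
            define t where "t = (x + t1) / 2"
            have t: "t > 0" "t < t1" "x \<le> t" using x t1g unfolding t_def by auto
            have tR: "t \<le> R" "t \<le> RB" using t t1 R2 \<epsilon> by auto
            have "\<forall>y\<in>{0..t}. W y = w y"
              by (rule sol_unique[OF sol_restrict[OF SW t(1) tR(2)] sol_restrict[OF Sw t(1) tR(1)] lam1 N])
                 (use W1 w1 v10 nW neg t t1 R2 in auto)
            then show ?thesis using x t by auto
          qed
          have deq: "w' x = W' x" if x: "x \<in> {0<..<t1}" for x
          proof -
            have "(w has_real_derivative w' x) (at x)" by (rule sol_at[OF Sw]) (use x t1 in auto)
            moreover have "(W has_real_derivative W' x) (at x)"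
              by (rule sol_at[OF SW]) (use x t1 R2 \<epsilon> in auto)
            then have "(w has_real_derivative W' x) (at x)"
              by (rule has_field_derivative_transform_within_open[of _ _ _ "{0<..<t1}"]) (use x same in auto)
            ultimately show ?thesis by (rule DERIV_unique)
          qed
          define d where "d = (\<lambda>x. w' x - W' x)"
          have cd: "continuous_on {0..t1} d"
          proof -
            have "continuous_on {0..t1} w'" by (rule continuous_on_subset[OF cw']) (use t1 in auto)
            moreover have "continuous_on {0..t1} W'" by (rule continuous_on_subset[OF cW']) (use t1 R2 \<epsilon> in auto)
            ultimately show ?thesis unfolding d_def by (intro continuous_intros)
          qed
          have dt1: "d t1 > 0" unfolding d_def using t1 nW t1g R2 by auto
          obtain r where r: "r > 0" "\<forall>x\<in>{0..t1}. dist x t1 < r \<longrightarrow> dist (d x) (d t1) < d t1"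
          proof -
            have ci: "\<forall>x\<in>{0..t1}. \<forall>\<epsilon>>0. \<exists>\<delta>>0. \<forall>x'\<in>{0..t1}. dist x' x < \<delta> \<longrightarrow> dist (d x') (d x) < \<epsilon>"
              using cd unfolding continuous_on_iff .
            have "t1 \<in> {0..t1}" using t1g by simp
            then show ?thesis using ci[rule_format, of t1 "d t1"] dt1 that by blast
          qed
          define x where "x = t1 - min r t1 / 2"
          have x: "x \<in> {0<..<t1}" "dist x t1 < r" using r t1g unfolding x_def dist_real_def by auto
          have "d x = 0" using deq[OF x(1)] unfolding d_def by simp
          then show False using r x dt1 unfolding dist_real_def by auto
        qed
      qed
    qed
  qed
qed

end
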